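(* Let $L,R$ be nonempty subsets of a group $G$ such that $\mathcal{W}(L)$ and $\mathcal{W}(R)$ are subgroups of $G$. Then $2\mathrm{S}(G;L,R)$ is strongly connected if and only if $G=\mathcal{W}(L)\mathcal{W}(R)$ and some element of $\bar{L}$ or of $\bar{R}$ is strongly connected to $e$.
   Context: For nonempty subsets $L,R$ of a group $G$, the two-sided group digraph $2\mathrm{S}(G;L,R)$ has vertex set $G$ and a directed arc $(g,h)$ if and only if $h=l^{-1}gr$ for some $l\in L$, $r\in R$. Write $\bar{L}=L\cup L^{-1}$, $\bar{R}=R\cup R^{-1}$. For nonempty $S$, $\mathcal{W}(S)$ is the set of elements expressible as finite products $s_1\cdots s_n$, $n\ge1$, $s_i\in S$. Vertex $g$ is strongly connected to $h$ if there are directed paths from $g$ to $h$ and from $h$ to $g$; the digraph is strongly connected if every pair of vertices is strongly connected. *)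

theory Defs
  imports "HOL-Algebra.Coset"
begin

definition two_sided_arc :: "('a, 'b) monoid_scheme \<Rightarrow> 'a set \<Rightarrow> 'a set \<Rightarrow> 'a \<Rightarrow> 'a \<Rightarrow> bool" where
  "two_sided_arc G L R g h \<longleftrightarrow> g \<in> carrier G \<and> h \<in> carrier G \<and>
     (\<exists>l\<in>L. \<exists>r\<in>R. h = inv\<^bsub>G\<^esub> l \<otimes>\<^bsub>G\<^esub> g \<otimes>\<^bsub>G\<^esub> r)"

definition two_sided_path :: "('a, 'b) monoid_scheme \<Rightarrow> 'a set \<Rightarrow> 'a set \<Rightarrow> 'a \<Rightarrow> 'a \<Rightarrow> bool" where
  "two_sided_path G L R = (two_sided_arc G L R)\<^sup>*\<^sup>*"

definition strongly_connected_to :: "('a, 'b) monoid_scheme \<Rightarrow> 'a set \<Rightarrow> 'a set \<Rightarrow> 'a \<Rightarrow> 'a \<Rightarrow> bool" where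
  "strongly_connected_to G L R g h \<longleftrightarrow> two_sided_path G L R g h \<and> two_sided_path G L R h g"

definition two_sided_strongly_connected :: "('a, 'b) monoid_scheme \<Rightarrow> 'a set \<Rightarrow> 'a set \<Rightarrow> bool" where
  "two_sided_strongly_connected G L R \<longleftrightarrow>
     (\<forall>g\<in>carrier G. \<forall>h\<in>carrier G. strongly_connected_to G L R g h)"

definition words :: "('a, 'b) monoid_scheme \<Rightarrow> 'a set \<Rightarrow> 'a set" where
  "words G S = {x. \<exists>xs. xs \<noteq> [] \<and> set xs \<subseteq> S \<and> x = foldr (\<lambda>a b. a \<otimes>\<^bsub>G\<^esub> b) xs \<one>\<^bsub>G\<^esub>}"

definition sym_closure :: "('a, 'b) monoid_scheme \<Rightarrow> 'a set \<Rightarrow> 'a set" where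
  "sym_closure G S = S \<union> (\<lambda>x. inv\<^bsub>G\<^esub> x) ` S"

end

theory Submission
  imports Defs
begin

primrec pw :: "('a, 'b) monoid_scheme \<Rightarrow> 'a set \<Rightarrow> nat \<Rightarrow> 'a set" where
  "pw G S 0 = {\<one>\<^bsub>G\<^esub>}"
| "pw G S (Suc n) = {a \<otimes>\<^bsub>G\<^esub> b | a b. a \<in> S \<and> b \<in> pw G S n}"

lemma len_match:
  fixes N \<alpha> \<beta> i j :: nat
  assumes "N \<ge> 1" "\<alpha> = \<beta> + 1 \<or> \<alpha> + 1 = \<beta> + N \<or> \<beta> = \<alpha> + 1 \<or> \<beta> + 1 = \<alpha> + N"
  shows "\<exists>t s s'. i + t * \<alpha> + s * N = j + t * \<beta> + s' * N"
proof -
  obtain M where M: "N = Suc M" using assms(1) by (cases N) auto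
  show ?thesis using assms(2)
  proof (elim disjE)
    assume h: "\<alpha> = \<beta> + 1"
    have "i + (j + M * i) * (\<beta> + 1) + 0 * Suc M = j + (j + M * i) * \<beta> + i * Suc M"
      by (simp add: algebra_simps)
    then show ?thesis using h M by blast
  next
    assume "\<alpha> + 1 = \<beta> + N"
    then have h: "\<alpha> = \<beta> + M" using M by simp
    have "i + (i + M * j) * (\<beta> + M) + j * Suc M = j + (i + M * j) * \<beta> + (i + M * j) * Suc M"
      by (simp add: algebra_simps)
    then show ?thesis using h M by blast
  next
    assume h: "\<beta> = \<alpha> + 1"
    have "i + (i + M * j) * \<alpha> + j * Suc M = j + (i + M * j) * (\<alpha> + 1) + 0 * Suc M"
      by (simp add: algebra_simps)
    then show ?thesis using h M by blast
  next
    assume "\<beta> + 1 = \<alpha> + N"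
    then have h: "\<beta> = \<alpha> + M" using M by simp
    have "i + (j + M * i) * \<alpha> + (j + M * i) * Suc M = j + (j + M * i) * (\<alpha> + M) + i * Suc M"
      by (simp add: algebra_simps)
    then show ?thesis using h M by blast
  qed
qed

context group
begin

lemma inv_cancel_l [simp]: "x \<in> carrier G \<Longrightarrow> y \<in> carrier G \<Longrightarrow> inv x \<otimes> (x \<otimes> y) = y"
  by (simp add: m_assoc[symmetric])

lemma inv_cancel_r [simp]: "x \<in> carrier G \<Longrightarrow> y \<in> carrier G \<Longrightarrow> x \<otimes> (inv x \<otimes> y) = y"
  by (simp add: m_assoc[symmetric])

lemma pw_carrier: "S \<subseteq> carrier G \<Longrightarrow> pw G S n \<subseteq> carrier G"
  by (induct n) auto

lemma pw_single: "S \<subseteq> carrier G \<Longrightarrow> x \<in> S \<Longrightarrow> x \<in> pw G S 1"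
  by (auto intro!: exI[of _ x])

lemma pw_mult: "S \<subseteq> carrier G \<Longrightarrow> a \<in> pw G S i \<Longrightarrow> b \<in> pw G S j \<Longrightarrow> a \<otimes> b \<in> pw G S (i + j)"
proof (induct i arbitrary: a)
  case 0
  then show ?case using pw_carrier[of S j] by auto
next
  case (Suc i)
  then obtain x a' where "a = x \<otimes> a'" "x \<in> S" "a' \<in> pw G S i" by auto
  moreover have "a' \<otimes> b \<in> pw G S (i + j)" using Suc calculation by blast
  moreover have "x \<otimes> a' \<otimes> b = x \<otimes> (a' \<otimes> b)"
    using calculation Suc.prems pw_carrier[of S] by (meson m_assoc subsetD)
  ultimately show ?case by auto
qed

lemma pw_one_mult: "S \<subseteq> carrier G \<Longrightarrow> \<one> \<in> pw G S N \<Longrightarrow> \<one> \<in> pw G S (s * N)"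
proof (induct s)
  case 0 then show ?case by simp
next
  case (Suc s)
  then have "\<one> \<otimes> \<one> \<in> pw G S (N + s * N)" using pw_mult by blast
  then show ?case by simp
qed

lemma pw_pad: "S \<subseteq> carrier G \<Longrightarrow> x \<in> pw G S X \<Longrightarrow> \<one> \<in> pw G S N \<Longrightarrow> x \<in> pw G S (X + s * N)"
proof -
  assume a: "S \<subseteq> carrier G" "x \<in> pw G S X" "\<one> \<in> pw G S N"
  then have "x \<otimes> \<one> \<in> pw G S (X + s * N)" using pw_mult pw_one_mult by blast
  moreover have "x \<in> carrier G" using a pw_carrier by blast
  ultimately show ?thesis by simp
qed

lemma pw_pow: "S \<subseteq> carrier G \<Longrightarrow> c \<in> pw G S \<alpha> \<Longrightarrow> c [^] t \<in> pw G S (t * \<alpha>)"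
proof (induct t)
  case 0 then show ?case by simp
next
  case (Suc t)
  then have "c [^] t \<otimes> c \<in> pw G S (t * \<alpha> + \<alpha>)" using pw_mult by blast
  then show ?case by (simp add: add.commute)
qed

lemma foldr_pw: "set xs \<subseteq> S \<Longrightarrow> foldr (\<lambda>a b. a \<otimes> b) xs \<one> \<in> pw G S (length xs)"
  by (induct xs) auto

lemma pw_foldr: "x \<in> pw G S n \<Longrightarrow> \<exists>xs. length xs = n \<and> set xs \<subseteq> S \<and> x = foldr (\<lambda>a b. a \<otimes> b) xs \<one>"
proof (induct n arbitrary: x)
  case 0 then show ?case by simp
next
  case (Suc n)
  then obtain a b where "x = a \<otimes> b" "a \<in> S" "b \<in> pw G S n" by auto
  with Suc obtain xs where "length xs = n \<and> set xs \<subseteq> S \<and> b = foldr (\<lambda>a b. a \<otimes> b) xs \<one>" by blast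
  with \<open>x = a \<otimes> b\<close> \<open>a \<in> S\<close> show ?case by (intro exI[of _ "a # xs"]) auto
qed

lemma words_pw: "x \<in> words G S \<longleftrightarrow> (\<exists>n\<ge>1. x \<in> pw G S n)"
proof
  assume "x \<in> words G S"
  then obtain xs where "xs \<noteq> []" "set xs \<subseteq> S" "x = foldr (\<lambda>a b. a \<otimes> b) xs \<one>"
    unfolding words_def by auto
  then show "\<exists>n\<ge>1. x \<in> pw G S n" using foldr_pw
    by (metis One_nat_def Suc_leI length_greater_0_conv)
next
  assume "\<exists>n\<ge>1. x \<in> pw G S n"
  then obtain n where "n \<ge> 1" "x \<in> pw G S n" by auto
  then obtain xs where "length xs = n \<and> set xs \<subseteq> S \<and> x = foldr (\<lambda>a b. a \<otimes> b) xs \<one>"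
    using pw_foldr by blast
  with \<open>n \<ge> 1\<close> show "x \<in> words G S" unfolding words_def
    by (intro CollectI exI[of _ xs]) auto
qed

lemma path_intro:
  assumes "L \<subseteq> carrier G" "R \<subseteq> carrier G"
  shows "g \<in> carrier G \<Longrightarrow> p \<in> pw G L n \<Longrightarrow> q \<in> pw G R n \<Longrightarrow>
     two_sided_path G L R g (inv p \<otimes> g \<otimes> q)"
proof (induct n arbitrary: g p q)
  case 0 then show ?case by (simp add: two_sided_path_def)
next
  case (Suc n)
  then obtain l p' r q' where pq: "p = l \<otimes> p'" "l \<in> L" "p' \<in> pw G L n"
     "q = r \<otimes> q'" "r \<in> R" "q' \<in> pw G R n" by auto
  have c: "l \<in> carrier G" "r \<in> carrier G" "p' \<in> carrier G" "q' \<in> carrier G"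
    using pq assms pw_carrier by blast+
  define g1 where "g1 = inv l \<otimes> g \<otimes> r"
  have g1: "g1 \<in> carrier G" using c Suc.prems unfolding g1_def by simp
  have arc: "two_sided_arc G L R g g1" unfolding two_sided_arc_def g1_def
    using Suc.prems pq c by auto
  have "two_sided_path G L R g1 (inv p' \<otimes> g1 \<otimes> q')" using Suc.hyps g1 pq by blast
  moreover have "inv p' \<otimes> g1 \<otimes> q' = inv p \<otimes> g \<otimes> q"
    unfolding g1_def pq using c Suc.prems by (simp add: inv_mult_group m_assoc)
  ultimately show ?case using arc unfolding two_sided_path_def
    by (metis converse_rtranclp_into_rtranclp)
qed

lemma path_elim:
  assumes "L \<subseteq> carrier G" "R \<subseteq> carrier G"
    and "two_sided_path G L R g h" "g \<in> carrier G"
  shows "\<exists>n p q. p \<in> pw G L n \<and> q \<in> pw G R n \<and> h = inv p \<otimes> g \<otimes> q"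
  using assms(3) unfolding two_sided_path_def
proof (induct rule: rtranclp_induct)
  case base
  then show ?case using assms(4) by (intro exI[of _ 0]) simp
next
  case (step y z)
  then obtain n p q where h: "p \<in> pw G L n" "q \<in> pw G R n" "y = inv p \<otimes> g \<otimes> q" by blast
  from step(2) obtain l r where lr: "l \<in> L" "r \<in> R" "z = inv l \<otimes> y \<otimes> r"
    unfolding two_sided_arc_def by blast
  have c: "l \<in> carrier G" "r \<in> carrier G" "p \<in> carrier G" "q \<in> carrier G"
    using h lr assms pw_carrier by blast+
  have "p \<otimes> l \<in> pw G L (n + 1)" using pw_mult pw_single h lr assms by blast
  moreover have "q \<otimes> r \<in> pw G R (n + 1)" using pw_mult pw_single h lr assms by blast
  moreover have "z = inv (p \<otimes> l) \<otimes> g \<otimes> (q \<otimes> r)"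
    using lr h c assms(4) by (simp add: inv_mult_group m_assoc)
  ultimately show ?case by blast
qed

lemma match:
  assumes "S \<subseteq> carrier G" "T \<subseteq> carrier G" "N \<ge> 1" "\<one> \<in> pw G S N" "\<one> \<in> pw G T N"
    and "c \<in> pw G S \<alpha>" "c \<in> pw G T \<beta>"
    and "\<alpha> = \<beta> + 1 \<or> \<alpha> + 1 = \<beta> + N \<or> \<beta> = \<alpha> + 1 \<or> \<beta> + 1 = \<alpha> + N"
    and "u \<in> pw G S i" "v \<in> pw G T j"
  shows "\<exists>n (t::nat). c [^] t \<otimes> u \<in> pw G S n \<and> c [^] t \<otimes> v \<in> pw G T n
     \<and> u \<otimes> c [^] t \<in> pw G S n \<and> v \<otimes> c [^] t \<in> pw G T n"
proof -
  obtain t s s' where eq: "i + t * \<alpha> + s * N = j + t * \<beta> + s' * N"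
    using len_match[OF assms(3) assms(8)] by blast
  have p1: "c [^] t \<in> pw G S (t * \<alpha>)" "c [^] t \<in> pw G T (t * \<beta>)"
    using pw_pow assms by blast+
  have "c [^] t \<otimes> u \<in> pw G S (t * \<alpha> + i)" "u \<otimes> c [^] t \<in> pw G S (i + t * \<alpha>)"
    using pw_mult p1 assms by blast+
  then have A: "c [^] t \<otimes> u \<in> pw G S (i + t * \<alpha> + s * N)" "u \<otimes> c [^] t \<in> pw G S (i + t * \<alpha> + s * N)"
    using pw_pad assms by (metis add.commute)+
  have "c [^] t \<otimes> v \<in> pw G T (t * \<beta> + j)" "v \<otimes> c [^] t \<in> pw G T (j + t * \<beta>)"
    using pw_mult p1 assms by blast+
  then have B: "c [^] t \<otimes> v \<in> pw G T (j + t * \<beta> + s' * N)" "v \<otimes> c [^] t \<in> pw G T (j + t * \<beta> + s' * N)"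
    using pw_pad assms by (metis add.commute)+
  have "c [^] t \<otimes> u \<in> pw G S (j + t * \<beta> + s' * N) \<and> u \<otimes> c [^] t \<in> pw G S (j + t * \<beta> + s' * N)"
    using A eq by simp
  with B show ?thesis by blast
qed

lemma main_aux:
  assumes "L \<subseteq> carrier G" and "L \<noteq> {}"
    and "R \<subseteq> carrier G" and "R \<noteq> {}"
    and "subgroup (words G L) G"
    and "subgroup (words G R) G"
  shows "two_sided_strongly_connected G L R \<longleftrightarrow>
           (carrier G = words G L <#>\<^bsub>G\<^esub> words G R \<and>
            (\<exists>x \<in> sym_closure G L \<union> sym_closure G R. strongly_connected_to G L R x \<one>\<^bsub>G\<^esub>))"
proof -
  note LC = assms(1) and RC = assms(3) and SA = assms(5) and SB = assms(6)
  let ?A = "words G L" and ?B = "words G R"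
  have Acar: "?A \<subseteq> carrier G" using subgroup.subset[OF SA] .
  have Bcar: "?B \<subseteq> carrier G" using subgroup.subset[OF SB] .
  have pwA: "p \<in> ?A" if "p \<in> pw G L n" for p n
  proof (cases "n = 0")
    case True then show ?thesis using that subgroup.one_closed[OF SA] by simp
  next
    case False then show ?thesis using that words_pw by (metis less_one not_le)
  qed
  have pwB: "p \<in> ?B" if "p \<in> pw G R n" for p n
  proof (cases "n = 0")
    case True then show ?thesis using that subgroup.one_closed[OF SB] by simp
  next
    case False then show ?thesis using that words_pw by (metis less_one not_le)
  qed
  have Apw: "\<exists>n\<ge>1. a \<in> pw G L n" if "a \<in> ?A" for a using that words_pw by blast
  have Bpw: "\<exists>n\<ge>1. a \<in> pw G R n" if "a \<in> ?B" for a using that words_pw by blast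
  have symcar: "sym_closure G L \<union> sym_closure G R \<subseteq> carrier G"
    using LC RC unfolding sym_closure_def by auto
  show ?thesis
  proof
    assume sc: "two_sided_strongly_connected G L R"
    have "carrier G \<subseteq> ?A <#> ?B"
    proof
      fix h assume h: "h \<in> carrier G"
      then have "two_sided_path G L R \<one> h"
        using sc unfolding two_sided_strongly_connected_def strongly_connected_to_def by blast
      then obtain n p q where pq: "p \<in> pw G L n" "q \<in> pw G R n" "h = inv p \<otimes> \<one> \<otimes> q"
        using path_elim[OF LC RC] by blast
      have "inv p \<in> ?A" using pwA[OF pq(1)] subgroup.m_inv_closed[OF SA] by blast
      moreover have "q \<in> ?B" using pwB[OF pq(2)] .
      moreover have "h = inv p \<otimes> q" using pq calculation Acar Bcar by auto
      ultimately show "h \<in> ?A <#> ?B" unfolding set_mult_def by blast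
    qed
    moreover have "?A <#> ?B \<subseteq> carrier G"
      unfolding set_mult_def using Acar Bcar by auto
    moreover obtain l where "l \<in> L" using assms(2) by blast
    moreover have "l \<in> sym_closure G L" using \<open>l \<in> L\<close> unfolding sym_closure_def by blast
    moreover have "strongly_connected_to G L R l \<one>"
      using sc \<open>l \<in> L\<close> LC unfolding two_sided_strongly_connected_def by blast
    ultimately show "carrier G = ?A <#> ?B \<and>
            (\<exists>x \<in> sym_closure G L \<union> sym_closure G R. strongly_connected_to G L R x \<one>)"
      by blast
  next
    assume "carrier G = ?A <#> ?B \<and>
            (\<exists>x \<in> sym_closure G L \<union> sym_closure G R. strongly_connected_to G L R x \<one>)"
    then obtain x where carr: "carrier G = ?A <#> ?B"
      and xs: "x \<in> sym_closure G L \<union> sym_closure G R" and xsc: "strongly_connected_to G L R x \<one>"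
      by blast
    have xc: "x \<in> carrier G" using xs symcar by blast
    have "two_sided_path G L R \<one> x" using xsc unfolding strongly_connected_to_def by blast
    then obtain k p q where pq: "p \<in> pw G L k" "q \<in> pw G R k" "x = inv p \<otimes> \<one> \<otimes> q"
      using path_elim[OF LC RC] by blast
    have pc: "p \<in> carrier G" and qc: "q \<in> carrier G" using pq pw_carrier LC RC by blast+
    have xpq: "x = inv p \<otimes> q" using pq pc qc by simp
    obtain n1 where n1: "n1 \<ge> 1" "\<one> \<in> pw G L n1" using Apw subgroup.one_closed[OF SA] by blast
    obtain n2 where n2: "n2 \<ge> 1" "\<one> \<in> pw G R n2" using Bpw subgroup.one_closed[OF SB] by blast
    have key: "\<exists>N c \<alpha> \<beta>. N \<ge> 1 \<and> \<one> \<in> pw G L N \<and> \<one> \<in> pw G R N \<and> c \<in> pw G L \<alpha> \<and> c \<in> pw G R \<beta>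
       \<and> (\<alpha> = \<beta> + 1 \<or> \<alpha> + 1 = \<beta> + N \<or> \<beta> = \<alpha> + 1 \<or> \<beta> + 1 = \<alpha> + N)"
    proof -
      have onesL: "\<one> \<in> pw G L (n2 * n1)" using pw_one_mult[OF LC n1(2)] .
      have onesR: "\<one> \<in> pw G R (n1 * n2)" using pw_one_mult[OF RC n2(2)] .
      consider "x \<in> L" | l where "l \<in> L" "x = inv l" | "x \<in> R" | r where "r \<in> R" "x = inv r"
        using xs unfolding sym_closure_def by blast
      then show ?thesis
      proof cases
        case 1
        have "p \<otimes> x \<in> pw G L (k + 1)" using pw_mult[OF LC pq(1) pw_single[OF LC 1]] .
        moreover have "p \<otimes> x = q" using xpq pc qc by simp
        ultimately show ?thesis using onesL onesR n1 n2 pq(2)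
          by (intro exI[of _ "n1 * n2"] exI[of _ q] exI[of _ "k+1"] exI[of _ k])
             (auto simp: mult.commute)
      next
        case 2
        have lc: "l \<in> carrier G" using 2 LC by blast
        have "l \<in> ?A" using words_pw pw_single[OF LC 2(1)] by blast
        then have "inv l \<in> ?A" using subgroup.m_inv_closed[OF SA] by blast
        then obtain m where m: "inv l \<in> pw G L m" using Apw by blast
        have "l \<otimes> inv l \<in> pw G L (1 + m)" using pw_mult[OF LC pw_single[OF LC 2(1)] m] .
        then have o: "\<one> \<in> pw G L (1 + m)" using lc by simp
        define M where "M = m + (n2 - 1) * (1 + m)"
        have MN: "M + 1 = (1 + m) * n2" unfolding M_def using n2(1) by (cases n2) (auto simp: algebra_simps)
        have iM: "inv l \<in> pw G L M" unfolding M_def using pw_pad[OF LC m o] .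
        have oL: "\<one> \<in> pw G L ((1 + m) * n2)" using pw_one_mult[OF LC o, of n2] by (simp add: mult.commute)
        have oR: "\<one> \<in> pw G R ((1 + m) * n2)" using pw_one_mult[OF RC n2(2), of "1 + m"] .
        have "p \<otimes> x \<in> pw G L (k + M)" using pw_mult[OF LC pq(1) iM] 2 by simp
        moreover have "p \<otimes> x = q" using xpq pc qc by simp
        ultimately show ?thesis using oL oR pq(2) MN n2
          by (intro exI[of _ "(1 + m) * n2"] exI[of _ q] exI[of _ "k+M"] exI[of _ k]) auto
      next
        case 3
        have rc: "x \<in> carrier G" using 3 RC by blast
        have "x \<in> ?B" using words_pw pw_single[OF RC 3] by blast
        then have "inv x \<in> ?B" using subgroup.m_inv_closed[OF SB] by blast
        then obtain m where m: "inv x \<in> pw G R m" using Bpw by blast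
        have "x \<otimes> inv x \<in> pw G R (1 + m)" using pw_mult[OF RC pw_single[OF RC 3] m] .
        then have o: "\<one> \<in> pw G R (1 + m)" using rc by simp
        define M where "M = m + (n1 - 1) * (1 + m)"
        have MN: "M + 1 = (1 + m) * n1" unfolding M_def using n1(1) by (cases n1) (auto simp: algebra_simps)
        have iM: "inv x \<in> pw G R M" unfolding M_def using pw_pad[OF RC m o] .
        have oR: "\<one> \<in> pw G R ((1 + m) * n1)" using pw_one_mult[OF RC o, of n1] by (simp add: mult.commute)
        have oL: "\<one> \<in> pw G L ((1 + m) * n1)" using pw_one_mult[OF LC n1(2), of "1 + m"] .
        have "q \<otimes> inv x \<in> pw G R (k + M)" using pw_mult[OF RC pq(2) iM] .
        moreover have "q \<otimes> inv x = p"
        proof -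
          have "p \<otimes> x = q" using xpq pc qc by simp
          then have "q \<otimes> inv x = p \<otimes> x \<otimes> inv x" by simp
          also have "\<dots> = p" using pc rc by (simp add: m_assoc)
          finally show ?thesis .
        qed
        ultimately show ?thesis using oL oR pq(1) MN n1
          by (intro exI[of _ "(1 + m) * n1"] exI[of _ p] exI[of _ k] exI[of _ "k+M"]) auto
      next
        case 4
        have rc: "r \<in> carrier G" using 4 RC by blast
        have "q \<otimes> r \<in> pw G R (k + 1)" using pw_mult[OF RC pq(2) pw_single[OF RC 4(1)]] .
        moreover have "q \<otimes> r = p"
        proof -
          have "p \<otimes> x = q" using xpq pc qc by simp
          then have "q \<otimes> r = p \<otimes> inv r \<otimes> r" using 4 by simp
          also have "\<dots> = p" using pc rc by (simp add: m_assoc)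
          finally show ?thesis .
        qed
        ultimately show ?thesis using onesL onesR n1 n2 pq(1)
          by (intro exI[of _ "n1 * n2"] exI[of _ p] exI[of _ k] exI[of _ "k+1"])
             (auto simp: mult.commute)
      qed
    qed
    then obtain N c \<alpha> \<beta> where N: "N \<ge> 1" "\<one> \<in> pw G L N" "\<one> \<in> pw G R N"
      and c: "c \<in> pw G L \<alpha>" "c \<in> pw G R \<beta>"
      and cond: "\<alpha> = \<beta> + 1 \<or> \<alpha> + 1 = \<beta> + N \<or> \<beta> = \<alpha> + 1 \<or> \<beta> + 1 = \<alpha> + N"
      by blast
    have cc: "c \<in> carrier G" using c pw_carrier LC by blast
    have decomp: "\<exists>a b. a \<in> ?A \<and> b \<in> ?B \<and> g = a \<otimes> b" if "g \<in> carrier G" for g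
      using that carr unfolding set_mult_def by blast
    have to: "two_sided_path G L R \<one> g" if g: "g \<in> carrier G" for g
    proof -
      obtain a b where ab: "a \<in> ?A" "b \<in> ?B" "g = a \<otimes> b" using decomp[OF g] by blast
      have ac: "a \<in> carrier G" and bc: "b \<in> carrier G" using ab Acar Bcar by blast+
      obtain i where i: "inv a \<in> pw G L i" using Apw subgroup.m_inv_closed[OF SA ab(1)] by blast
      obtain j where j: "b \<in> pw G R j" using Bpw ab(2) by blast
      obtain n and t :: nat where nt: "c [^] t \<otimes> inv a \<in> pw G L n" "c [^] t \<otimes> b \<in> pw G R n"
        using match[OF LC RC N c cond i j] by blast
      have "two_sided_path G L R \<one> (inv (c [^] t \<otimes> inv a) \<otimes> \<one> \<otimes> (c [^] t \<otimes> b))"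
        using path_intro[OF LC RC one_closed nt] .
      moreover have "inv (c [^] t \<otimes> inv a) \<otimes> \<one> \<otimes> (c [^] t \<otimes> b) = g"
        using ab ac bc cc by (simp add: inv_mult_group m_assoc)
      ultimately show ?thesis by simp
    qed
    have frm: "two_sided_path G L R g \<one>" if g: "g \<in> carrier G" for g
    proof -
      obtain a b where ab: "a \<in> ?A" "b \<in> ?B" "g = a \<otimes> b" using decomp[OF g] by blast
      have ac: "a \<in> carrier G" and bc: "b \<in> carrier G" using ab Acar Bcar by blast+
      obtain i where i: "a \<in> pw G L i" using Apw ab(1) by blast
      obtain j where j: "inv b \<in> pw G R j" using Bpw subgroup.m_inv_closed[OF SB ab(2)] by blast
      obtain n and t :: nat where nt: "a \<otimes> c [^] t \<in> pw G L n" "inv b \<otimes> c [^] t \<in> pw G R n"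
        using match[OF LC RC N c cond i j] by blast
      have "two_sided_path G L R g (inv (a \<otimes> c [^] t) \<otimes> g \<otimes> (inv b \<otimes> c [^] t))"
        using path_intro[OF LC RC g nt] .
      moreover have "inv (a \<otimes> c [^] t) \<otimes> g \<otimes> (inv b \<otimes> c [^] t) = \<one>"
        using ab ac bc cc by (simp add: inv_mult_group m_assoc)
      ultimately show ?thesis by simp
    qed
    show "two_sided_strongly_connected G L R"
      unfolding two_sided_strongly_connected_def strongly_connected_to_def
    proof (intro ballI conjI)
      fix g h assume g: "g \<in> carrier G" and h: "h \<in> carrier G"
      show "two_sided_path G L R g h"
        using frm[OF g] to[OF h] unfolding two_sided_path_def by (rule rtranclp_trans)
      show "two_sided_path G L R h g"
        using frm[OF h] to[OF g] unfolding two_sided_path_def by (rule rtranclp_trans)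
    qed
  qed
qed

end

theorem mainTheorem12:
  fixes G :: "('a, 'b) monoid_scheme" and L R :: "'a set"
  assumes "group G"
    and "L \<subseteq> carrier G" and "L \<noteq> {}"
    and "R \<subseteq> carrier G" and "R \<noteq> {}"
    and "subgroup (words G L) G"
    and "subgroup (words G R) G"
  shows "two_sided_strongly_connected G L R \<longleftrightarrow>
           (carrier G = words G L <#>\<^bsub>G\<^esub> words G R \<and>
            (\<exists>x \<in> sym_closure G L \<union> sym_closure G R. strongly_connected_to G L R x \<one>\<^bsub>G\<^esub>))"
  by (rule group.main_aux[OF assms(1) assms(2-7)])

end
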